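(* Let $X$ be a continuous-time Markov chain on a countable state space $\mathbb S$ with generator $\mathcal L$. Suppose there exist a finite set $K\subset\mathbb S$ and a positive function $V$ on $\mathbb S$, bounded from above, such that $\mathcal LV(x)\le-1$ for all $x\in\mathbb S\setminus K$. If there exists $z\in K$ lying in a closed, irreducible component of $\mathbb S$, and there exists $y\in\mathbb S$ reachable from $z$ with $V(y)<\inf_{x\in K}V(x)$, then $X$ is explosive.
   Context: For a continuous-time Markov chain with transition rates $q(x,x')$, $\mathcal LV(x)=\sum_{x'\ne x}q(x,x')\big(V(x')-V(x)\big)$. A set of states is closed if the chain cannot leave it, and irreducible if every state in it is reachable from every other. $X$ is explosive if from some initial state it makes infinitely many jumps in finite time with positive probability. *)

theory Defs
  imports "HOL-Analysis.Analysis"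
begin

text \<open>A continuous-time Markov chain on a countable state space (the type 'a) is given
by its transition rates q x x' (for x' \<noteq> x).\<close>

definition ctmc_rates :: "('a::countable \<Rightarrow> 'a \<Rightarrow> real) \<Rightarrow> bool" where
  "ctmc_rates q \<longleftrightarrow> (\<forall>x x'. x' \<noteq> x \<longrightarrow> 0 \<le> q x x') \<and>
                     (\<forall>x. (q x) summable_on (UNIV - {x}))"

definition total_rate :: "('a \<Rightarrow> 'a \<Rightarrow> real) \<Rightarrow> 'a \<Rightarrow> real" where
  "total_rate q x = (\<Sum>\<^sub>\<infinity>x'\<in>UNIV - {x}. q x x')"

definition generator :: "('a \<Rightarrow> 'a \<Rightarrow> real) \<Rightarrow> ('a \<Rightarrow> real) \<Rightarrow> 'a \<Rightarrow> real" where
  "generator q V x = (\<Sum>\<^sub>\<infinity>x'\<in>UNIV - {x}. q x x' * (V x' - V x))"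

definition step_rel :: "('a \<Rightarrow> 'a \<Rightarrow> real) \<Rightarrow> ('a \<times> 'a) set" where
  "step_rel q = {(x, x'). x \<noteq> x' \<and> 0 < q x x'}"

definition reachable :: "('a \<Rightarrow> 'a \<Rightarrow> real) \<Rightarrow> 'a \<Rightarrow> 'a \<Rightarrow> bool" where
  "reachable q x y \<longleftrightarrow> (x, y) \<in> (step_rel q)\<^sup>*"

definition closed_set :: "('a \<Rightarrow> 'a \<Rightarrow> real) \<Rightarrow> 'a set \<Rightarrow> bool" where
  "closed_set q C \<longleftrightarrow> (\<forall>x\<in>C. \<forall>x'. x' \<noteq> x \<and> x' \<notin> C \<longrightarrow> q x x' = 0)"

definition irreducible_set :: "('a \<Rightarrow> 'a \<Rightarrow> real) \<Rightarrow> 'a set \<Rightarrow> bool" where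
  "irreducible_set q C \<longleftrightarrow> (\<forall>x\<in>C. \<forall>y\<in>C. reachable q x y)"

text \<open>Law of the jump times of the (minimal) chain started at x:
  jump_time_cdf q n x t = P_x(J_n \<le> t), where J_n is the time of the n-th jump
  (J_0 = 0; J_n = \<infinity> if the chain is absorbed before the n-th jump).
  After a holding time ~ Exp(q(x)) the chain jumps to x' with probability q(x,x')/q(x).\<close>
fun jump_time_cdf :: "('a::countable \<Rightarrow> 'a \<Rightarrow> real) \<Rightarrow> nat \<Rightarrow> 'a \<Rightarrow> real \<Rightarrow> ennreal" where
  "jump_time_cdf q 0 x t = (if 0 \<le> t then 1 else 0)"
| "jump_time_cdf q (Suc n) x t =
     (if total_rate q x = 0 then 0 else
       \<integral>\<^sup>+ s. indicator {0..t} s * ennreal (total_rate q x * exp (- total_rate q x * s)) *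
          (\<integral>\<^sup>+ x'. ennreal (q x x' / total_rate q x) * jump_time_cdf q n x' (t - s)
              \<partial>count_space (UNIV - {x})) \<partial>lborel)"

text \<open>Explosion probability from x: P_x(sup_n J_n < \<infinity>)
  = P_x(\<Union>t. \<Inter>n. {J_n \<le> t}) = sup_t inf_n P_x(J_n \<le> t) (continuity of measure).\<close>
definition explosion_prob :: "('a::countable \<Rightarrow> 'a \<Rightarrow> real) \<Rightarrow> 'a \<Rightarrow> ennreal" where
  "explosion_prob q x = (SUP t. INF n. jump_time_cdf q n x t)"

definition explosive :: "('a::countable \<Rightarrow> 'a \<Rightarrow> real) \<Rightarrow> bool" where
  "explosive q \<longleftrightarrow> (\<exists>x. 0 < explosion_prob q x)"

end

theory Submission
  imports Defs "HOL-Probability.Probability"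
begin

lemma nn_count:
  fixes f :: "'b \<Rightarrow> real"
  assumes "f summable_on A" "\<And>x. x \<in> A \<Longrightarrow> 0 \<le> f x"
  shows "(\<integral>\<^sup>+x. ennreal (f x) \<partial>count_space A) = ennreal (infsum f A)"
proof -
  have "Infinite_Sum.abs_summable_on f A" using assms(1) summable_on_iff_abs_summable_on_real by blast
  hence "Infinite_Set_Sum.abs_summable_on f A" using abs_summable_equivalent by blast
  thus ?thesis using nn_integral_conv_infsetsum[of f A] assms infsetsum_infsum by metis
qed

lemma ennreal_sub_le:
  assumes "ennreal a \<le> X + ennreal c" "0 \<le> c"
  shows "ennreal (a - c) \<le> X"
proof -
  have "ennreal (a - c) = ennreal a - ennreal c" using assms(2) by (simp add: ennreal_minus)
  also have "\<dots> \<le> X" unfolding ennreal_minus_le_iff using assms(1) by (simp add: add.commute)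
  finally show ?thesis .
qed

lemma ennreal_add_ge: "ennreal (x + y) \<le> ennreal x + ennreal y"
proof (cases "0 \<le> x \<and> 0 \<le> y")
  case True then show ?thesis by (simp add: ennreal_plus)
next
  case False
  then consider "x < 0" | "y < 0" by linarith
  then show ?thesis
  proof cases
    case 1
    have "ennreal (x + y) \<le> ennreal y" using 1 by (intro ennreal_leI) simp
    also have "\<dots> \<le> ennreal x + ennreal y" by (rule add_increasing) auto
    finally show ?thesis .
  next
    case 2
    have "ennreal (x + y) \<le> ennreal x" using 2 by (intro ennreal_leI) simp
    also have "\<dots> \<le> ennreal x + ennreal y" by (rule add_increasing2) auto
    finally show ?thesis .
  qed
qed

lemma div_up:
  assumes "0 < t" "ennreal (a / t) \<le> X" shows "ennreal a \<le> ennreal t * X"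
proof (cases "a \<le> 0")
  case True then show ?thesis by (simp add: ennreal_neg)
next
  case False
  have "ennreal a = ennreal t * ennreal (a / t)" using assms False by (simp add: ennreal_mult[symmetric])
  also have "\<dots> \<le> ennreal t * X" using assms by (intro mult_left_mono) auto
  finally show ?thesis .
qed

lemma div_down:
  assumes "0 < t" "ennreal a \<le> ennreal t * X" shows "ennreal (a / t) \<le> X"
proof (cases "a \<le> 0")
  case True
  have "a / t \<le> 0" using True assms by (simp add: divide_nonpos_pos)
  then show ?thesis by (simp add: ennreal_neg)
next
  case False
  have "ennreal t * ennreal (a / t) = ennreal a" using assms False by (simp add: ennreal_mult[symmetric])
  then have "ennreal t * ennreal (a / t) \<le> ennreal t * X" using assms by simp
  then show ?thesis using assms by (simp add: ennreal_mult_le_mult_iff)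
qed

lemma gen_decomp:
  assumes q: "ctmc_rates q" and Vpos: "\<And>x. 0 < V x" and VB: "\<And>x. V x \<le> B"
  shows "(\<lambda>x'. q x x' * V x') summable_on (UNIV - {x})"
    and "generator q V x = infsum (\<lambda>x'. q x x' * V x') (UNIV - {x}) - total_rate q x * V x"
proof -
  let ?A = "UNIV - {x}"
  have qs: "(q x) summable_on ?A" and qn: "\<And>x'. x' \<in> ?A \<Longrightarrow> 0 \<le> q x x'"
    using q unfolding ctmc_rates_def by auto
  show s: "(\<lambda>x'. q x x' * V x') summable_on ?A"
  proof (rule summable_on_comparison_test[where f="\<lambda>x'. B * q x x'"])
    show "(\<lambda>x'. B * q x x') summable_on ?A" using qs by (rule summable_on_cmult_right)
    fix x' assume x': "x' \<in> ?A"
    then show "q x x' * V x' \<le> B * q x x'" using qn[OF x'] VB[of x'] by (simp add: mult.commute mult_right_mono)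
    show "0 \<le> q x x' * V x'" using qn[OF x'] Vpos[of x'] by (simp add: less_imp_le)
  qed
  have "generator q V x = infsum (\<lambda>x'. q x x' * V x' + (- V x) * q x x') ?A"
    unfolding generator_def by (rule infsum_cong) (simp add: algebra_simps)
  also have "\<dots> = infsum (\<lambda>x'. q x x' * V x') ?A + infsum (\<lambda>x'. (- V x) * q x x') ?A"
    by (rule infsum_add[OF s summable_on_cmult_right[OF qs]])
  also have "infsum (\<lambda>x'. (- V x) * q x x') ?A = - V x * total_rate q x"
    unfolding total_rate_def using infsum_cmult_right[OF qs, of "- V x"] by simp
  finally show "generator q V x = infsum (\<lambda>x'. q x x' * V x') ?A - total_rate q x * V x" by simp
qed

lemma expo_lemma:
  assumes L: "0 < L" and t: "0 < t" and a: "a \<le> t"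
  shows "ennreal ((a - 1/L)/t) \<le> (\<integral>\<^sup>+ s. indicator {0..t} s * ennreal (L * exp (- L * s)) * ennreal ((a - s)/t) \<partial>lborel)"
proof -
  let ?g = "\<lambda>s. ennreal (exponential_density L s)"
  have neg: "ennreal ((a - s)/t) = 0" if "t < s" for s
    using that a t by (simp add: ennreal_eq_0_iff divide_nonpos_pos)
  have eq: "(\<integral>\<^sup>+ s. indicator {0..t} s * ennreal (L * exp (- L * s)) * ennreal ((a - s)/t) \<partial>lborel)
      = (\<integral>\<^sup>+ s. ?g s * ennreal ((a - s)/t) \<partial>lborel)"
    by (intro nn_integral_cong) (auto simp: exponential_density_def neg mult.commute split: split_indicator)
  have m0: "(\<integral>\<^sup>+ s. ?g s \<partial>lborel) = 1" using nn_integral_erlang_ith_moment[OF L, of 0 0] by simp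
  have m1: "(\<integral>\<^sup>+ s. ennreal (exponential_density L s * s) \<partial>lborel) = ennreal (1/L)"
    using nn_integral_erlang_ith_moment[OF L, of 0 1] by simp
  have "ennreal (a/t) = (\<integral>\<^sup>+ s. ?g s * ennreal (a/t) \<partial>lborel)" by (simp add: nn_integral_multc m0)
  also have "\<dots> \<le> (\<integral>\<^sup>+ s. ?g s * ennreal ((a - s)/t) + ennreal (exponential_density L s * s) * ennreal (1/t) \<partial>lborel)"
  proof (intro nn_integral_mono)
    fix s :: real
    show "?g s * ennreal (a/t) \<le> ?g s * ennreal ((a - s)/t) + ennreal (exponential_density L s * s) * ennreal (1/t)"
    proof (cases "s < 0")
      case True then show ?thesis by (simp add: exponential_density_def)
    next
      case False
      have d0: "0 \<le> exponential_density L s" using L by (rule exponential_density_nonneg)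
      have "ennreal (exponential_density L s * s) * ennreal (1/t) = ?g s * ennreal (s/t)"
        using False d0 t by (simp add: ennreal_mult[symmetric])
      moreover have "ennreal (a/t) \<le> ennreal ((a - s)/t) + ennreal (s/t)"
        using ennreal_add_ge[of "(a - s)/t" "s/t"] by (simp add: diff_divide_distrib)
      ultimately show ?thesis
        by (simp add: distrib_left[symmetric] mult_left_mono)
    qed
  qed
  also have "\<dots> = (\<integral>\<^sup>+ s. ?g s * ennreal ((a - s)/t) \<partial>lborel) + ennreal (1/L) * ennreal (1/t)"
    by (subst nn_integral_add) (auto simp: nn_integral_multc m1)
  also have "ennreal (1/L) * ennreal (1/t) = ennreal (1/L * (1/t))" using L t by (subst ennreal_mult) auto
  finally have "ennreal (a/t) \<le> (\<integral>\<^sup>+ s. ?g s * ennreal ((a - s)/t) \<partial>lborel) + ennreal (1/L * (1/t))" .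
  then have "ennreal (a/t - 1/L * (1/t)) \<le> (\<integral>\<^sup>+ s. ?g s * ennreal ((a - s)/t) \<partial>lborel)"
    by (rule ennreal_sub_le) (use L t in simp)
  moreover have "a/t - 1/L * (1/t) = (a - 1/L)/t" using L t by (simp add: field_simps)
  ultimately show ?thesis using eq by simp
qed

lemma invariant:
  fixes q :: "'a::countable \<Rightarrow> 'a \<Rightarrow> real"
  assumes q: "ctmc_rates q" and Vpos: "\<And>x. 0 < V x" and VB: "\<And>x. V x \<le> B"
    and gen: "\<And>x. x \<notin> K \<Longrightarrow> generator q V x \<le> -1"
    and m: "0 < m" and mK: "\<And>x. x \<in> K \<Longrightarrow> m \<le> V x"
  shows "0 \<le> t \<Longrightarrow> ennreal t \<le> ennreal t * jump_time_cdf q n x t + ennreal (V x * (1 + t / m))"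
proof (induction n arbitrary: x t)
  case 0 then show ?case by (simp add: add_increasing2)
next
  case (Suc n)
  note IH = Suc.IH and t0 = Suc.prems
  show ?case
  proof (cases "x \<in> K")
    case True
    have "V x / m \<ge> 1" using mK[OF True] m by simp
    then have "1 * t \<le> (V x / m) * t" using t0 by (intro mult_right_mono) auto
    then have "t \<le> V x * t / m" by simp
    then have "t \<le> V x * (1 + t/m)" using Vpos[of x] by (simp add: algebra_simps)
    then have "ennreal t \<le> ennreal (V x * (1 + t/m))" by (rule ennreal_leI)
    then show ?thesis by (simp add: add_increasing)
  next
    case False
    define L where "L = total_rate q x"
    define A where "A = UNIV - {x}"
    define S where "S = infsum (\<lambda>x'. q x x' * V x') A"
    have qs: "(q x) summable_on A" and qn: "\<And>x'. x' \<in> A \<Longrightarrow> 0 \<le> q x x'"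
      using q unfolding ctmc_rates_def A_def by auto
    have sS: "(\<lambda>x'. q x x' * V x') summable_on A" using gen_decomp(1)[OF q Vpos VB] A_def by simp
    have dec: "generator q V x = S - L * V x" using gen_decomp(2)[OF q Vpos VB] A_def S_def L_def by simp
    have S0: "0 \<le> S" unfolding S_def using qn Vpos by (intro infsum_nonneg) (simp add: less_imp_le)
    have L00: "0 \<le> L" unfolding L_def total_rate_def using qn A_def by (intro infsum_nonneg) simp
    have gle: "S - L * V x \<le> -1" using gen[OF False] dec by simp
    have L0: "0 < L"
    proof (rule ccontr)
      assume "\<not> 0 < L" then have "L = 0" using L00 by simp
      then show False using gle S0 by simp
    qed
    define W where "W = S / L"
    have W0: "0 \<le> W" using S0 L0 by (simp add: W_def)
    have hW: "W + 1/L \<le> V x"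
    proof -
      have "S \<le> L * V x - 1" using gle by simp
      then have "S / L \<le> (L * V x - 1) / L" using L0 by (simp add: divide_right_mono)
      also have "\<dots> = V x - 1/L" using L0 by (simp add: field_simps)
      finally show ?thesis by (simp add: W_def)
    qed
    define C where "C = W * (1 + t/m)"
    have C0: "0 \<le> C" using W0 t0 m by (simp add: C_def)
    show ?thesis
    proof (cases "t = 0")
      case True then show ?thesis by simp
    next
      case False
      hence tp: "0 < t" using t0 by simp
      define Q where "Q s = (\<integral>\<^sup>+ x'. ennreal (q x x' / L) * jump_time_cdf q n x' (t - s) \<partial>count_space A)" for s
      have p_sum: "(\<lambda>x'. q x x' / L) summable_on A"
        using summable_on_cmult_left[OF qs, of "inverse L"] by (simp add: divide_inverse)
      have p1: "infsum (\<lambda>x'. q x x' / L) A = 1"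
        using infsum_cmult_left'[of "q x" "inverse L" A] L0
        by (simp add: divide_inverse L_def total_rate_def A_def)
      have Qb: "ennreal ((t - C - s) / t) \<le> Q s" if s: "0 \<le> s" "s \<le> t" for s
      proof -
        define u where "u = t - s"
        have u0: "0 \<le> u" "u \<le> t" using s by (auto simp: u_def)
        have pu: "(\<integral>\<^sup>+ x'. ennreal (q x x' / L) \<partial>count_space A) = 1"
          using nn_count[OF p_sum] qn L0 p1 by simp
        have pV: "(\<integral>\<^sup>+ x'. ennreal (q x x' / L) * ennreal (V x' * (1 + u/m)) \<partial>count_space A)
             = ennreal (W * (1 + u/m))"
        proof -
          have "(\<integral>\<^sup>+ x'. ennreal (q x x' / L) * ennreal (V x' * (1 + u/m)) \<partial>count_space A)
              = (\<integral>\<^sup>+ x'. ennreal (q x x' * V x' * ((1 + u/m) / L)) \<partial>count_space A)"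
          proof (intro nn_integral_cong)
            fix x' assume "x' \<in> space (count_space A)"
            then have "0 \<le> q x x'" using qn by simp
            then show "ennreal (q x x' / L) * ennreal (V x' * (1 + u/m)) = ennreal (q x x' * V x' * ((1 + u/m) / L))"
              using L0 Vpos[of x'] u0 m by (subst ennreal_mult[symmetric]) (auto simp: less_imp_le)
          qed
          also have "\<dots> = ennreal (infsum (\<lambda>x'. q x x' * V x' * ((1 + u/m) / L)) A)"
            by (rule nn_count[OF summable_on_cmult_left[OF sS]])
               (use qn Vpos L0 u0 m in \<open>simp add: less_imp_le\<close>)
          also have "infsum (\<lambda>x'. q x x' * V x' * ((1 + u/m) / L)) A = W * (1 + u/m)"
            using infsum_cmult_left'[of "\<lambda>x'. q x x' * V x'" "(1 + u/m) / L" A]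
            by (simp add: S_def W_def)
          finally show ?thesis .
        qed
        have "ennreal u = (\<integral>\<^sup>+ x'. ennreal (q x x' / L) * ennreal u \<partial>count_space A)"
          by (simp add: nn_integral_multc pu)
        also have "\<dots> \<le> (\<integral>\<^sup>+ x'. ennreal (q x x' / L) * (ennreal u * jump_time_cdf q n x' u)
                        + ennreal (q x x' / L) * ennreal (V x' * (1 + u/m)) \<partial>count_space A)"
        proof (intro nn_integral_mono)
          fix x'
          have "ennreal u \<le> ennreal u * jump_time_cdf q n x' u + ennreal (V x' * (1 + u / m))"
            using IH[OF u0(1)] .
          then have "ennreal (q x x' / L) * ennreal u \<le> ennreal (q x x' / L) * (ennreal u * jump_time_cdf q n x' u + ennreal (V x' * (1 + u / m)))"
            by (rule mult_left_mono) simp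
          then show "ennreal (q x x' / L) * ennreal u \<le> ennreal (q x x' / L) * (ennreal u * jump_time_cdf q n x' u)
                        + ennreal (q x x' / L) * ennreal (V x' * (1 + u/m))"
            by (simp add: distrib_left)
        qed
        also have "\<dots> = (\<integral>\<^sup>+ x'. ennreal u * (ennreal (q x x' / L) * jump_time_cdf q n x' u) \<partial>count_space A)
                        + ennreal (W * (1 + u/m))"
          by (subst nn_integral_add) (auto simp: pV mult.left_commute)
        also have "\<dots> = ennreal u * Q s + ennreal (W * (1 + u/m))"
          by (subst nn_integral_cmult) (auto simp: Q_def u_def)
        also have "\<dots> \<le> ennreal t * Q s + ennreal C"
        proof (intro add_mono mult_right_mono ennreal_leI)
          show "u \<le> t" by fact
          show "W * (1 + u / m) \<le> C" unfolding C_def using W0 u0 m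
            by (intro mult_left_mono) (auto simp: divide_right_mono)
        qed simp
        finally have "ennreal (u - C) \<le> ennreal t * Q s" by (rule ennreal_sub_le) (rule C0)
        then show ?thesis by (intro div_down[OF tp]) (simp add: u_def algebra_simps)
      qed
      have "ennreal ((t - C - 1/L)/t) \<le> (\<integral>\<^sup>+ s. indicator {0..t} s * ennreal (L * exp (- L * s)) * ennreal ((t - C - s)/t) \<partial>lborel)"
        by (rule expo_lemma[OF L0 tp]) (use C0 in simp)
      also have "\<dots> \<le> (\<integral>\<^sup>+ s. indicator {0..t} s * ennreal (L * exp (- L * s)) * Q s \<partial>lborel)"
        by (intro nn_integral_mono) (auto split: split_indicator intro!: mult_left_mono Qb)
      also have "\<dots> = jump_time_cdf q (Suc n) x t" using L0 by (simp add: L_def Q_def A_def)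
      finally have "ennreal (t - C - 1/L) \<le> ennreal t * jump_time_cdf q (Suc n) x t"
        by (rule div_up[OF tp])
      moreover have "C + 1/L \<le> V x * (1 + t/m)"
      proof -
        have "1/L * 1 \<le> 1/L * (1 + t/m)" using L0 t0 m by (intro mult_left_mono) auto
        then have "C + 1/L \<le> (W + 1/L) * (1 + t/m)" by (simp add: C_def algebra_simps)
        also have "\<dots> \<le> V x * (1 + t/m)" using hW t0 m by (intro mult_right_mono) auto
        finally show ?thesis .
      qed
      ultimately have "ennreal (t - C - 1/L) + ennreal (C + 1/L) \<le> ennreal t * jump_time_cdf q (Suc n) x t + ennreal (V x * (1 + t/m))"
        by (intro add_mono ennreal_leI)
      moreover have "ennreal t \<le> ennreal (t - C - 1/L) + ennreal (C + 1/L)"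
        using ennreal_add_ge[of "t - C - 1/L" "C + 1/L"] by simp
      ultimately show ?thesis by (rule order_trans[rotated])
    qed
  qed
qed

theorem corollaryA5:
  fixes q :: "'a::countable \<Rightarrow> 'a \<Rightarrow> real" and V :: "'a \<Rightarrow> real" and K :: "'a set"
  assumes "ctmc_rates q"
    and "finite K"
    and "\<And>x. 0 < V x"
    and "\<exists>B. \<forall>x. V x \<le> B"
    and "\<And>x. x \<notin> K \<Longrightarrow> generator q V x \<le> -1"
    and "\<exists>z\<in>K. \<exists>C. closed_set q C \<and> irreducible_set q C \<and> z \<in> C \<and>
           (\<exists>y. reachable q z y \<and> V y < (INF x\<in>K. V x))"
  shows "explosive q"
proof -
  obtain B where VB: "\<And>x. V x \<le> B" using assms(4) by blast
  obtain y where y: "V y < (INF x\<in>K. V x)" using assms(6) by blast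
  define m where "m = (INF x\<in>K. V x)"
  have mK: "\<And>x. x \<in> K \<Longrightarrow> m \<le> V x" unfolding m_def
    using assms(2) by (intro cINF_lower) (auto intro: bdd_below_finite)
  have ym: "V y < m" using y m_def by simp
  have m0: "0 < m" using ym assms(3)[of y] by simp
  define d where "d = 1 - V y / m"
  have d0: "0 < d" using ym m0 by (simp add: d_def)
  define t where "t = 2 * V y / d"
  have tp: "0 < t" using d0 assms(3)[of y] by (simp add: t_def)
  have key: "t - V y * (1 + t / m) = V y"
  proof -
    have "t - V y * (1 + t / m) = t * d - V y" using m0 by (simp add: d_def algebra_simps)
    also have "t * d = 2 * V y" using d0 by (simp add: t_def)
    finally show ?thesis by simp
  qed
  have ratio: "V y / t = d / 2" using d0 assms(3)[of y] by (simp add: t_def field_simps)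
  have bnd: "ennreal (d / 2) \<le> jump_time_cdf q n y t" for n
  proof -
    have "ennreal t \<le> ennreal t * jump_time_cdf q n y t + ennreal (V y * (1 + t / m))"
      using invariant[OF assms(1) assms(3) VB assms(5) m0 mK, where t=t and n=n and x=y] tp by simp
    then have "ennreal (t - V y * (1 + t / m)) \<le> ennreal t * jump_time_cdf q n y t"
      by (rule ennreal_sub_le) (use assms(3)[of y] tp m0 in simp)
    then have "ennreal (V y / t) \<le> jump_time_cdf q n y t" using key by (intro div_down[OF tp]) simp
    then show ?thesis using ratio by simp
  qed
  have "ennreal (d / 2) \<le> (INF n. jump_time_cdf q n y t)" by (intro INF_greatest bnd)
  also have "\<dots> \<le> explosion_prob q y" unfolding explosion_prob_def by (rule SUP_upper) simp
  finally have le: "ennreal (d / 2) \<le> explosion_prob q y" .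
  have "0 < ennreal (d / 2)" using d0 by simp
  then have "0 < explosion_prob q y" using le by (rule less_le_trans)
  then show ?thesis unfolding explosive_def by blast
qed

end
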